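(* Assume the Hamiltonian is thermodynamically stable. Then there exists a positive function $c(\beta)$, independent of $\Lambda$, such that for every finite box $\Lambda$ $$V(\mathcal{A})=\mathrm{Av}(\mathcal{A}^2)-\mathrm{Av}(\mathcal{A})^2\le c(\beta)\,|\Lambda|,$$ where $\mathcal{A}=\mathcal{A}(\beta)=\ln\mathcal{Z}(\beta)$.
   Context: For each finite $d$-dimensional parallelepiped $\Lambda\subset\mathbb{Z}^d$ let $\Sigma_\Lambda=\{-1,1\}^\Lambda$, and for $X\subset\Lambda$ let $\sigma_X=\prod_{i\in X}\sigma_i$ (with $\sigma_\emptyset=0$). Let $\{J_X\}$ be independent centered Gaussian random variables with variances $\mathrm{Av}(J_X^2)=\Delta_X^2$, translation invariant, where $\mathrm{Av}$ denotes expectation over the $J$'s. The Hamiltonian is $H_\Lambda(\sigma)=-\sum_{X\subset\Lambda}J_X\sigma_X$ and $\mathcal{Z}(\beta)=\sum_{\sigma\in\Sigma_\Lambda}e^{-\beta H_\Lambda(\sigma)}$. The Hamiltonian is thermodynamically stable if there is $\bar c<\infty$ with $\sup_{\Lambda}\frac{1}{|\Lambda|}\sum_{X\subset\Lambda}\Delta_X^2\le\bar c$. *)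

theory Defs
  imports "HOL-Probability.Probability"
begin

(* Sites are points of Z^d, modelled as int ^ 'd for a finite index type 'd (d = CARD('d)). *)

definition box_Zd :: "int ^ 'd \<Rightarrow> int ^ 'd \<Rightarrow> (int ^ 'd) set" where
  "box_Zd a b = {x. \<forall>i. a $ i \<le> x $ i \<and> x $ i \<le> b $ i}"

definition is_box :: "(int ^ 'd::finite) set \<Rightarrow> bool" where
  "is_box \<Lambda> \<longleftrightarrow> (\<exists>a b. (\<forall>i. a $ i \<le> b $ i) \<and> \<Lambda> = box_Zd a b)"

definition configs :: "'a set \<Rightarrow> ('a \<Rightarrow> real) set" where
  "configs \<Lambda> = (\<Lambda> \<rightarrow>\<^sub>E {-1, 1})"

(* sigma_X = prod_{i in X} sigma_i, with the paper's convention sigma_{emptyset} = 0 *)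
definition sigma_prod :: "('a \<Rightarrow> real) \<Rightarrow> 'a set \<Rightarrow> real" where
  "sigma_prod \<sigma> X = (if X = {} then 0 else (\<Prod>i\<in>X. \<sigma> i))"

definition hamiltonian :: "'a set \<Rightarrow> ('a set \<Rightarrow> real) \<Rightarrow> ('a \<Rightarrow> real) \<Rightarrow> real" where
  "hamiltonian \<Lambda> J \<sigma> = - (\<Sum>X\<in>Pow \<Lambda>. J X * sigma_prod \<sigma> X)"

definition partition_fn :: "'a set \<Rightarrow> real \<Rightarrow> ('a set \<Rightarrow> real) \<Rightarrow> real" where
  "partition_fn \<Lambda> \<beta> J = (\<Sum>\<sigma>\<in>configs \<Lambda>. exp (- \<beta> * hamiltonian \<Lambda> J \<sigma>))"

definition free_energy :: "'a set \<Rightarrow> real \<Rightarrow> ('a set \<Rightarrow> real) \<Rightarrow> real" where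
  "free_energy \<Lambda> \<beta> J = ln (partition_fn \<Lambda> \<beta> J)"

(* Av: expectation over independent centred Gaussians J_X (X subset Lambda) with
   variance Delta_X^2, realised as J_X = Delta_X * g_X with g_X i.i.d. standard normal. *)
definition gauss_space :: "'a set \<Rightarrow> ('a set \<Rightarrow> real) measure" where
  "gauss_space \<Lambda> = PiM (Pow \<Lambda>) (\<lambda>_. std_normal_distribution)"

definition Av :: "'a set \<Rightarrow> ('a set \<Rightarrow> real) \<Rightarrow> (('a set \<Rightarrow> real) \<Rightarrow> real) \<Rightarrow> real" where
  "Av \<Lambda> \<Delta> F = (\<integral>g. F (\<lambda>X. \<Delta> X * g X) \<partial>gauss_space \<Lambda>)"

definition Var_Av :: "'a set \<Rightarrow> ('a set \<Rightarrow> real) \<Rightarrow> (('a set \<Rightarrow> real) \<Rightarrow> real) \<Rightarrow> real" where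
  "Var_Av \<Lambda> \<Delta> F = Av \<Lambda> \<Delta> (\<lambda>J. (F J)\<^sup>2) - (Av \<Lambda> \<Delta> F)\<^sup>2"

definition transl_inv :: "((int ^ 'd) set \<Rightarrow> real) \<Rightarrow> bool" where
  "transl_inv \<Delta> \<longleftrightarrow> (\<forall>X a. \<Delta> ((\<lambda>x. x + a) ` X) = \<Delta> X)"

definition thermo_stable :: "((int ^ 'd::finite) set \<Rightarrow> real) \<Rightarrow> bool" where
  "thermo_stable \<Delta> \<longleftrightarrow> (\<exists>cbar. \<forall>\<Lambda>. is_box \<Lambda> \<longrightarrow>
      (\<Sum>X\<in>Pow \<Lambda>. (\<Delta> X)\<^sup>2) / real (card \<Lambda>) \<le> cbar)"

end

theory Submission
  imports Defs
begin

abbreviation "NN \<equiv> std_normal_distribution"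

lemma NN_prob: "prob_space NN"
  using real_dist_normal_dist real_distribution_def by blast

lemma NN_space[simp]: "space NN = UNIV" by simp
lemma NN_sets[simp]: "sets NN = sets borel" by simp

lemma NN_int2: "integrable NN (\<lambda>x. x^2)" "(\<integral>x. x^2 \<partial>NN) = 1"
  using std_normal_distribution_even_moments[of 1] by auto

lemma NN_int1: "integrable NN (\<lambda>x. x)"
  using integrable_std_normal_distribution_moment[of 1] by simp

lemma var_shift:
  fixes M :: "'a measure" and \<phi> :: "'a \<Rightarrow> real"
  assumes "prob_space M" "integrable M \<phi>" "integrable M (\<lambda>y. (\<phi> y)^2)"
  shows "(\<integral>y. (\<phi> y)^2 \<partial>M) - (\<integral>y. \<phi> y \<partial>M)^2 = (\<integral>y. (\<phi> y - c)^2 \<partial>M) - ((\<integral>y. \<phi> y \<partial>M) - c)^2"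
proof -
  interpret prob_space M by fact
  have e: "(\<lambda>y. (\<phi> y - c)^2) = (\<lambda>y. (\<phi> y)^2 - 2 * c * \<phi> y + c^2)"
    by (auto simp: power2_eq_square algebra_simps)
  have "(\<integral>y. (\<phi> y - c)^2 \<partial>M) = (\<integral>y. (\<phi> y)^2 \<partial>M) - 2 * c * (\<integral>y. \<phi> y \<partial>M) + c^2"
    unfolding e using assms(2,3) by (simp add: prob_space)
  then show ?thesis by (simp add: power2_eq_square algebra_simps)
qed

lemma var1:
  fixes \<phi> :: "real \<Rightarrow> real"
  assumes m: "\<phi> \<in> borel_measurable NN"
    and lip: "\<And>y. \<bar>\<phi> y - c\<bar> \<le> L * \<bar>y\<bar>"
  shows "integrable NN \<phi>" "integrable NN (\<lambda>y. (\<phi> y)^2)"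
    "(\<integral>y. (\<phi> y)^2 \<partial>NN) - (\<integral>y. \<phi> y \<partial>NN)^2 \<le> L^2"
    "(\<integral>y. \<phi> y \<partial>NN)^2 \<le> (\<integral>y. (\<phi> y)^2 \<partial>NN)"
proof -
  interpret prob_space NN by (rule NN_prob)
  have mN: "\<phi> \<in> borel_measurable NN" using m by simp
  have i1: "integrable NN (\<lambda>y. L * \<bar>y\<bar>)"
    using NN_int1 by (intro integrable_mult_right integrable_abs)
  have "integrable NN (\<lambda>y. \<phi> y - c)"
    by (rule Bochner_Integration.integrable_bound[OF i1]) (use mN in \<open>auto intro!: AE_I2 intro: order_trans[OF lip abs_ge_self]\<close>)
  then have "integrable NN (\<lambda>y. (\<phi> y - c) + c)"
    by (intro Bochner_Integration.integrable_add) auto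
  then show i\<phi>: "integrable NN \<phi>" by simp
  have i2: "integrable NN (\<lambda>y. L^2 * y^2)" using NN_int2 by simp
  have b2: "(\<phi> y - c)^2 \<le> L^2 * y^2" for y
  proof -
    have "(\<phi> y - c)^2 = \<bar>\<phi> y - c\<bar>^2" by simp
    also have "\<dots> \<le> (L * \<bar>y\<bar>)^2" using lip[of y] by (intro power_mono) auto
    finally show ?thesis by (simp add: power_mult_distrib)
  qed
  have i3: "integrable NN (\<lambda>y. (\<phi> y - c)^2)"
    by (rule Bochner_Integration.integrable_bound[OF i2]) (use mN b2 in auto)
  have e: "(\<lambda>y. (\<phi> y)^2) = (\<lambda>y. (\<phi> y - c)^2 + 2 * c * \<phi> y - c^2)"
    by (auto simp: power2_eq_square algebra_simps)
  show i4: "integrable NN (\<lambda>y. (\<phi> y)^2)"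
    unfolding e using i3 i\<phi> by (intro Bochner_Integration.integrable_diff Bochner_Integration.integrable_add) (auto simp: prob_space)
  have "(\<integral>y. (\<phi> y)^2 \<partial>NN) - (\<integral>y. \<phi> y \<partial>NN)^2 = (\<integral>y. (\<phi> y - c)^2 \<partial>NN) - ((\<integral>y. \<phi> y \<partial>NN) - c)^2"
    by (rule var_shift[OF NN_prob i\<phi> i4])
  also have "\<dots> \<le> (\<integral>y. (\<phi> y - c)^2 \<partial>NN)" by simp
  also have "\<dots> \<le> (\<integral>y. L^2 * y^2 \<partial>NN)"
    by (rule integral_mono[OF i3 i2 b2])
  also have "\<dots> = L^2" using NN_int2 by simp
  finally show "(\<integral>y. (\<phi> y)^2 \<partial>NN) - (\<integral>y. \<phi> y \<partial>NN)^2 \<le> L^2" .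
  have "(\<integral>y. (\<phi> y)^2 \<partial>NN) - (\<integral>y. \<phi> y \<partial>NN)^2 = (\<integral>y. (\<phi> y - (\<integral>y. \<phi> y \<partial>NN))^2 \<partial>NN) - ((\<integral>y. \<phi> y \<partial>NN) - (\<integral>y. \<phi> y \<partial>NN))^2"
    by (rule var_shift[OF NN_prob i\<phi> i4])
  also have "\<dots> \<ge> 0" by simp
  finally show "(\<integral>y. \<phi> y \<partial>NN)^2 \<le> (\<integral>y. (\<phi> y)^2 \<partial>NN)" by simp
qed

lemma PiNN_prob: "prob_space (PiM I (\<lambda>_. NN))"
  by (intro prob_space_PiM NN_prob)

lemma fub_int:
  fixes f :: "('i \<Rightarrow> real) \<Rightarrow> real"
  assumes "finite I" "i \<notin> I" "integrable (PiM (insert i I) (\<lambda>_. NN)) f"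
  shows "integrable (PiM I (\<lambda>_. NN)) (\<lambda>x. \<integral>y. f (x(i:=y)) \<partial>NN)"
proof -
  interpret ps: product_prob_space "\<lambda>_::'i. NN"
    by (simp add: NN_prob product_prob_space.intro product_prob_space_axioms.intro product_sigma_finite.intro prob_space_imp_sigma_finite)
  interpret pr: prob_space "PiM I (\<lambda>_. NN)" by (rule PiNN_prob)
  interpret pn: prob_space NN by (rule NN_prob)
  interpret pair: pair_sigma_finite NN "PiM I (\<lambda>_. NN)" ..
  have D: "distr (NN \<Otimes>\<^sub>M PiM I (\<lambda>_. NN)) (PiM (insert i I) (\<lambda>_. NN)) (\<lambda>(x, X). X(i := x)) = PiM (insert i I) (\<lambda>_. NN)"
    by (rule distr_pair_PiM_eq_PiM) (auto simp: NN_prob)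
  have T: "(\<lambda>(x, X). X(i := x)) \<in> measurable (NN \<Otimes>\<^sub>M PiM I (\<lambda>_. NN)) (PiM (insert i I) (\<lambda>_. NN))"
    by measurable
  have "integrable (NN \<Otimes>\<^sub>M PiM I (\<lambda>_. NN)) (\<lambda>p. f ((\<lambda>(x, X). X(i := x)) p))"
    by (rule integrable_distr[OF T]) (simp add: D assms)
  then have "integrable (NN \<Otimes>\<^sub>M PiM I (\<lambda>_. NN)) (\<lambda>(x, X). f (X(i := x)))"
    by (simp add: case_prod_unfold)
  then show ?thesis by (rule pair.integrable_snd)
qed

lemma PiNN_psf: "product_sigma_finite (\<lambda>_::'i. NN)"
  by (simp add: NN_prob product_sigma_finite.intro prob_space_imp_sigma_finite)

lemma ES:
  fixes f :: "('i \<Rightarrow> real) \<Rightarrow> real" and L :: "'i \<Rightarrow> real"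
  assumes "finite I"
  shows "integrable (PiM I (\<lambda>_. NN)) f \<Longrightarrow> integrable (PiM I (\<lambda>_. NN)) (\<lambda>x. (f x)^2) \<Longrightarrow>
    (\<And>g j y. g \<in> space (PiM I (\<lambda>_. NN)) \<Longrightarrow> j \<in> I \<Longrightarrow> \<bar>f (g(j:=y)) - f g\<bar> \<le> L j * \<bar>y - g j\<bar>) \<Longrightarrow>
    (\<integral>x. (f x)^2 \<partial>PiM I (\<lambda>_. NN)) - (\<integral>x. f x \<partial>PiM I (\<lambda>_. NN))^2 \<le> (\<Sum>j\<in>I. (L j)^2)"
  using assms
proof (induction I arbitrary: f rule: finite_induct)
  case empty
  then show ?case by (simp add: PiM_empty lebesgue_integral_count_space_finite)
next
  case (insert i I)
  define P where "P = PiM I (\<lambda>_::'i. NN)"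
  define P' where "P' = PiM (insert i I) (\<lambda>_::'i. NN)"
  interpret psf: product_sigma_finite "\<lambda>_::'i. NN" by (rule PiNN_psf)
  interpret pr: prob_space P unfolding P_def by (rule PiNN_prob)
  interpret pn: prob_space NN by (rule NN_prob)
  have fint: "integrable P' f" and f2int: "integrable P' (\<lambda>x. (f x)^2)"
    using insert.prems unfolding P'_def by auto
  have fm: "f \<in> borel_measurable P'" using fint by auto
  have sp: "x(i:=y) \<in> space P'" if "x \<in> space P" for x y
    using that unfolding P_def P'_def by (auto simp: space_PiM PiE_iff extensional_def)
  have spj: "x(j:=z) \<in> space P" if "x \<in> space P" "j \<in> I" for x j z
    using that unfolding P_def by (auto simp: space_PiM PiE_iff extensional_def)
  have phim: "(\<lambda>y. f (x(i:=y))) \<in> borel_measurable NN" if "x \<in> space P" for x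
    using measurable_comp[OF measurable_component_update fm[unfolded P'_def], OF that[unfolded P_def] \<open>i \<notin> I\<close>]
    by (simp add: comp_def fun_upd_def)
  have lip1: "\<bar>f (x(i:=y)) - f (x(i:=0))\<bar> \<le> L i * \<bar>y\<bar>" if "x \<in> space P" for x y
  proof -
    have "\<bar>f ((x(i:=0))(i:=y)) - f (x(i:=0))\<bar> \<le> L i * \<bar>y - (x(i:=0)) i\<bar>"
      using insert.prems(3)[of "x(i:=0)" i y] sp[OF that, of 0] unfolding P'_def by blast
    then show ?thesis by simp
  qed
  define h where "h x = (\<integral>y. f (x(i:=y)) \<partial>NN)" for x
  define q where "q x = (\<integral>y. (f (x(i:=y)))^2 \<partial>NN)" for x
  have hint: "integrable P h"
    unfolding h_def P_def by (rule fub_int[OF insert(1,2)]) (use fint P'_def in auto)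
  have qint: "integrable P q"
    unfolding q_def P_def by (rule fub_int[OF insert(1,2), where f="\<lambda>x. (f x)^2"]) (use f2int P'_def in auto)
  have hq: "(h x)^2 \<le> q x" if "x \<in> space P" for x
    unfolding h_def q_def using var1(4)[OF phim[OF that] lip1[OF that]] .
  have h2int: "integrable P (\<lambda>x. (h x)^2)"
  proof (rule Bochner_Integration.integrable_bound[OF qint])
    show "(\<lambda>x. (h x)^2) \<in> borel_measurable P" using hint by auto
    show "AE x in P. norm ((h x)^2) \<le> norm (q x)"
      using hq by (auto intro!: AE_I2 intro: order_trans[OF _ abs_ge_self])
  qed
  have liph: "\<bar>h (x(j:=z)) - h x\<bar> \<le> L j * \<bar>z - x j\<bar>" if x: "x \<in> space P" and j: "j \<in> I" for x j z
  proof -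
    have ji: "j \<noteq> i" using j insert(2) by auto
    have tw: "(x(j:=z))(i:=y) = (x(i:=y))(j:=z)" for y using ji by (rule fun_upd_twist)
    have i1: "integrable NN (\<lambda>y. f ((x(j:=z))(i:=y)))" using var1(1)[OF phim[OF spj[OF x j]] lip1[OF spj[OF x j]]] .
    have i2: "integrable NN (\<lambda>y. f (x(i:=y)))" using var1(1)[OF phim[OF x] lip1[OF x]] .
    have bd: "\<bar>f ((x(j:=z))(i:=y)) - f (x(i:=y))\<bar> \<le> L j * \<bar>z - x j\<bar>" for y
    proof -
      have "\<bar>f ((x(i:=y))(j:=z)) - f (x(i:=y))\<bar> \<le> L j * \<bar>z - (x(i:=y)) j\<bar>"
        using insert.prems(3)[of "x(i:=y)" j z] sp[OF x, of y] j unfolding P'_def by blast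
      then show ?thesis using ji tw by simp
    qed
    have "\<bar>h (x(j:=z)) - h x\<bar> = \<bar>\<integral>y. (f ((x(j:=z))(i:=y)) - f (x(i:=y))) \<partial>NN\<bar>"
      unfolding h_def using i1 i2 by simp
    also have "\<dots> \<le> (\<integral>y. \<bar>f ((x(j:=z))(i:=y)) - f (x(i:=y))\<bar> \<partial>NN)"
      by (rule integral_abs_bound)
    also have "\<dots> \<le> (\<integral>y. L j * \<bar>z - x j\<bar> \<partial>NN)"
      by (rule integral_mono) (use i1 i2 bd in auto)
    also have "\<dots> = L j * \<bar>z - x j\<bar>" using pn.prob_space by simp
    finally show ?thesis .
  qed
  have IH: "(\<integral>x. (h x)^2 \<partial>P) - (\<integral>x. h x \<partial>P)^2 \<le> (\<Sum>j\<in>I. (L j)^2)"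
    unfolding P_def by (rule insert.IH) (use hint h2int liph in \<open>auto simp: P_def simp del: fun_upd_apply\<close>)
  have E1: "(\<integral>x. f x \<partial>P') = (\<integral>x. h x \<partial>P)"
    unfolding P'_def P_def h_def by (rule psf.product_integral_insert[OF insert(1,2)]) (use fint P'_def in auto)
  have E2: "(\<integral>x. (f x)^2 \<partial>P') = (\<integral>x. q x \<partial>P)"
    unfolding P'_def P_def q_def by (rule psf.product_integral_insert[OF insert(1,2)]) (use f2int P'_def in auto)
  have qh: "q x - (h x)^2 \<le> (L i)^2" if "x \<in> space P" for x
    unfolding h_def q_def using var1(3)[OF phim[OF that] lip1[OF that]] .
  have "(\<integral>x. q x \<partial>P) - (\<integral>x. h x \<partial>P)^2 = ((\<integral>x. (h x)^2 \<partial>P) - (\<integral>x. h x \<partial>P)^2) + (\<integral>x. (q x - (h x)^2) \<partial>P)"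
    using qint h2int by simp
  also have "(\<integral>x. (q x - (h x)^2) \<partial>P) \<le> (\<integral>x. (L i)^2 \<partial>P)"
    by (rule integral_mono) (use qint h2int qh in auto)
  also have "(\<integral>x. (L i)^2 \<partial>P) = (L i)^2" by (simp add: pr.prob_space)
  finally have "(\<integral>x. q x \<partial>P) - (\<integral>x. h x \<partial>P)^2 \<le> (\<Sum>j\<in>I. (L j)^2) + (L i)^2" using IH by linarith
  then show ?case using E1 E2 insert(1,2) unfolding P'_def by simp
qed

lemma comp_int:
  assumes "j \<in> I"
  shows "integrable (PiM I (\<lambda>_. NN)) (\<lambda>g. \<bar>g j\<bar>)" "integrable (PiM I (\<lambda>_. NN)) (\<lambda>g. (g j)^2)"
proof -
  have D: "distr (PiM I (\<lambda>_. NN)) NN (\<lambda>\<omega>. \<omega> j) = NN"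
    using distr_PiM_component[of I "\<lambda>_. NN" j] assms NN_prob by auto
  have m: "(\<lambda>\<omega>. \<omega> j) \<in> measurable (PiM I (\<lambda>_. NN)) NN" using assms by measurable
  have "integrable (distr (PiM I (\<lambda>_. NN)) NN (\<lambda>\<omega>. \<omega> j)) (\<lambda>x. \<bar>x\<bar>)"
    unfolding D using NN_int1 by (rule integrable_abs)
  then show "integrable (PiM I (\<lambda>_. NN)) (\<lambda>g. \<bar>g j\<bar>)"
    by (subst (asm) integrable_distr_eq[OF m]) auto
  have "integrable (distr (PiM I (\<lambda>_. NN)) NN (\<lambda>\<omega>. \<omega> j)) (\<lambda>x. x^2)"
    unfolding D using NN_int2 by simp
  then show "integrable (PiM I (\<lambda>_. NN)) (\<lambda>g. (g j)^2)"
    by (subst (asm) integrable_distr_eq[OF m]) auto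
qed

lemma sq_le: "(x + y)^2 \<le> 2 * x^2 + 2 * (y::real)^2"
proof -
  have "(x+y)^2 + (x-y)^2 = 2*x^2 + 2*y^2" by (simp add: power2_eq_square algebra_simps)
  then show ?thesis using zero_le_power2[of "x-y"] by linarith
qed

lemma int_bound:
  fixes f :: "('i \<Rightarrow> real) \<Rightarrow> real"
  assumes fin: "finite I" and fm: "f \<in> borel_measurable (PiM I (\<lambda>_. NN))"
    and bd: "\<And>g. g \<in> space (PiM I (\<lambda>_. NN)) \<Longrightarrow> \<bar>f g\<bar> \<le> C + (\<Sum>j\<in>I. K j * \<bar>g j\<bar>)"
  shows "integrable (PiM I (\<lambda>_. NN)) f" "integrable (PiM I (\<lambda>_. NN)) (\<lambda>g. (f g)^2)"
proof -
  let ?P = "PiM I (\<lambda>_. NN)"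
  interpret pr: prob_space ?P by (rule PiNN_prob)
  have iB: "integrable ?P (\<lambda>g. C + (\<Sum>j\<in>I. K j * \<bar>g j\<bar>))"
    using comp_int(1) by (intro Bochner_Integration.integrable_add Bochner_Integration.integrable_sum integrable_mult_right) auto
  show "integrable ?P f"
    by (rule Bochner_Integration.integrable_bound[OF iB fm]) (auto intro!: AE_I2 intro: order_trans[OF bd abs_ge_self])
  have iB2: "integrable ?P (\<lambda>g. 2 * C^2 + 2 * (real (card I) * (\<Sum>j\<in>I. (K j)^2 * (g j)^2)))"
    using comp_int(2) by (intro Bochner_Integration.integrable_add Bochner_Integration.integrable_sum integrable_mult_right) auto
  have b2: "\<bar>(f g)^2\<bar> \<le> 2 * C^2 + 2 * (real (card I) * (\<Sum>j\<in>I. (K j)^2 * (g j)^2))" if g: "g \<in> space ?P" for g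
  proof -
    let ?S = "\<Sum>j\<in>I. K j * \<bar>g j\<bar>"
    have "\<bar>(f g)^2\<bar> = \<bar>f g\<bar>^2" by simp
    also have "\<dots> \<le> (C + ?S)^2" by (rule power_mono[OF bd[OF g]]) simp
    also have "\<dots> \<le> 2 * C^2 + 2 * ?S^2"
      by (rule sq_le)
    also have "?S^2 \<le> (\<Sum>j\<in>I. (K j * \<bar>g j\<bar>)^2) * card I" by (rule sum_squared_le_sum_of_squares)
    also have "(\<Sum>j\<in>I. (K j * \<bar>g j\<bar>)^2) = (\<Sum>j\<in>I. (K j)^2 * (g j)^2)"
      by (simp add: power_mult_distrib)
    finally show ?thesis by (simp add: mult.commute)
  qed
  show "integrable ?P (\<lambda>g. (f g)^2)"
  proof (rule Bochner_Integration.integrable_bound[OF iB2])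
    show "(\<lambda>g. (f g)^2) \<in> borel_measurable ?P" by (rule borel_measurable_power[OF fm])
    show "AE x in ?P. norm ((f x)^2) \<le> norm (2 * C^2 + 2 * (real (card I) * (\<Sum>j\<in>I. (K j)^2 * (x j)^2)))"
      by (rule AE_I2) (simp only: real_norm_def, rule order_trans[OF b2 abs_ge_self])
  qed
qed

lemma lse_lip:
  fixes a b :: "'s \<Rightarrow> real"
  assumes "finite S" "S \<noteq> {}" "\<And>s. s \<in> S \<Longrightarrow> \<bar>a s - b s\<bar> \<le> D"
  shows "\<bar>ln (\<Sum>s\<in>S. exp (a s)) - ln (\<Sum>s\<in>S. exp (b s))\<bar> \<le> D"
proof -
  have one: "ln (\<Sum>s\<in>S. exp (a s)) \<le> D + ln (\<Sum>s\<in>S. exp (b s))"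
    if h: "\<And>s. s \<in> S \<Longrightarrow> \<bar>a s - b s\<bar> \<le> D" for a b :: "'s \<Rightarrow> real"
  proof -
    have pa: "(\<Sum>s\<in>S. exp (a s)) > 0" "(\<Sum>s\<in>S. exp (b s)) > 0"
      using assms(1,2) by (auto intro!: sum_pos)
    have "(\<Sum>s\<in>S. exp (a s)) \<le> (\<Sum>s\<in>S. exp D * exp (b s))"
    proof (rule sum_mono)
      fix s assume "s \<in> S"
      then have "a s \<le> D + b s" using h[of s] by linarith
      then show "exp (a s) \<le> exp D * exp (b s)" by (simp flip: exp_add)
    qed
    also have "\<dots> = exp D * (\<Sum>s\<in>S. exp (b s))" by (simp add: sum_distrib_left)
    finally have "ln (\<Sum>s\<in>S. exp (a s)) \<le> ln (exp D * (\<Sum>s\<in>S. exp (b s)))"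
      using pa by simp
    also have "\<dots> = D + ln (\<Sum>s\<in>S. exp (b s))" using pa by (simp add: ln_mult)
    finally show ?thesis .
  qed
  have "ln (\<Sum>s\<in>S. exp (a s)) \<le> D + ln (\<Sum>s\<in>S. exp (b s))" by (rule one) (rule assms(3))
  moreover have "ln (\<Sum>s\<in>S. exp (b s)) \<le> D + ln (\<Sum>s\<in>S. exp (a s))"
    by (rule one) (metis assms(3) abs_minus_commute)
  ultimately show ?thesis by linarith
qed

lemma box_fin:
  fixes \<Lambda> :: "(int ^ 'd::finite) set"
  assumes "is_box \<Lambda>"
  shows "finite \<Lambda>" "\<Lambda> \<noteq> {}"
proof -
  obtain a b where ab: "\<forall>i. a $ i \<le> b $ i" "\<Lambda> = box_Zd a b" using assms unfolding is_box_def by blast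
  have "\<Lambda> \<subseteq> vec_lambda ` (PiE UNIV (\<lambda>i. {a$i..b$i}))"
  proof
    fix x assume "x \<in> \<Lambda>"
    then have "(\<lambda>i. x$i) \<in> PiE UNIV (\<lambda>i. {a$i..b$i})" using ab by (auto simp: box_Zd_def)
    then show "x \<in> vec_lambda ` (PiE UNIV (\<lambda>i. {a$i..b$i}))" by (metis image_eqI vec_lambda_eta)
  qed
  moreover have "finite (vec_lambda ` (PiE UNIV (\<lambda>i. {a$i..b$i})))"
    by (intro finite_imageI finite_PiE) auto
  ultimately show "finite \<Lambda>" by (rule finite_subset)
  have "a \<in> \<Lambda>" using ab by (auto simp: box_Zd_def)
  then show "\<Lambda> \<noteq> {}" by auto
qed

lemma configs_fin:
  assumes "finite \<Lambda>"
  shows "finite (configs \<Lambda>)" "configs \<Lambda> \<noteq> {}"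
  unfolding configs_def using assms by (auto intro!: finite_PiE simp: PiE_eq_empty_iff)

lemma sp_bound:
  assumes "\<sigma> \<in> configs \<Lambda>" "X \<subseteq> \<Lambda>"
  shows "\<bar>sigma_prod \<sigma> X\<bar> \<le> 1"
proof (cases "X = {}")
  case True then show ?thesis by (simp add: sigma_prod_def)
next
  case False
  have "\<bar>\<Prod>i\<in>X. \<sigma> i\<bar> = (\<Prod>i\<in>X. \<bar>\<sigma> i\<bar>)" by (rule abs_prod)
  also have "\<dots> = (\<Prod>i\<in>X. 1)"
  proof (rule prod.cong[OF refl])
    fix i assume "i \<in> X"
    then have "\<sigma> i \<in> {-1, 1}" using assms unfolding configs_def by (auto dest: PiE_mem)
    then show "\<bar>\<sigma> i\<bar> = 1" by auto
  qed
  finally show ?thesis using False by (simp add: sigma_prod_def)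
qed

theorem lemma3:
  fixes \<Delta> :: "(int ^ 'd::finite) set \<Rightarrow> real"
  assumes "transl_inv \<Delta>"
    and "thermo_stable \<Delta>"
  shows "\<exists>c :: real \<Rightarrow> real. (\<forall>\<beta>>0. c \<beta> > 0) \<and>
           (\<forall>\<beta>>0. \<forall>\<Lambda>. is_box \<Lambda> \<longrightarrow>
              Var_Av \<Lambda> \<Delta> (free_energy \<Lambda> \<beta>) \<le> c \<beta> * real (card \<Lambda>))"
proof -
  obtain cbar where cbar: "\<And>\<Lambda>. is_box \<Lambda> \<Longrightarrow> (\<Sum>X\<in>Pow \<Lambda>. (\<Delta> X)\<^sup>2) / real (card \<Lambda>) \<le> cbar"
    using assms(2) unfolding thermo_stable_def by blast
  define c where "c \<beta> = \<beta>^2 * (\<bar>cbar\<bar> + 1)" for \<beta> :: real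
  have "Var_Av \<Lambda> \<Delta> (free_energy \<Lambda> \<beta>) \<le> c \<beta> * real (card \<Lambda>)" if \<beta>: "\<beta> > 0" and box: "is_box \<Lambda>" for \<beta> \<Lambda>
  proof -
    have finL: "finite \<Lambda>" and neL: "\<Lambda> \<noteq> {}" using box_fin[OF box] by auto
    have cardpos: "real (card \<Lambda>) > 0" using finL neL by (simp add: card_gt_0_iff)
    have finI: "finite (Pow \<Lambda>)" using finL by simp
    note cf = configs_fin[OF finL]
    let ?P = "PiM (Pow \<Lambda>) (\<lambda>_. NN)"
    define E where "E \<sigma> g = (\<Sum>X\<in>Pow \<Lambda>. \<Delta> X * g X * sigma_prod \<sigma> X)" for \<sigma> and g :: "(int ^ 'd) set \<Rightarrow> real"
    define f where "f g = free_energy \<Lambda> \<beta> (\<lambda>X. \<Delta> X * g X)" for g :: "(int ^ 'd) set \<Rightarrow> real"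
    have fe: "f g = ln (\<Sum>\<sigma>\<in>configs \<Lambda>. exp (\<beta> * E \<sigma> g))" for g
      unfolding f_def E_def free_energy_def partition_fn_def hamiltonian_def by simp
    have Ediff: "E \<sigma> (g(X:=y)) - E \<sigma> g = \<Delta> X * (y - g X) * sigma_prod \<sigma> X" if X: "X \<in> Pow \<Lambda>" for \<sigma> g X y
    proof -
      have "E \<sigma> (g(X:=y)) - E \<sigma> g = (\<Sum>Y\<in>Pow \<Lambda>. \<Delta> Y * (g(X:=y)) Y * sigma_prod \<sigma> Y - \<Delta> Y * g Y * sigma_prod \<sigma> Y)"
        unfolding E_def by (simp add: sum_subtractf)
      also have "\<dots> = (\<Sum>Y\<in>Pow \<Lambda>. if Y = X then \<Delta> X * (y - g X) * sigma_prod \<sigma> X else 0)"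
        by (rule sum.cong) (auto simp: algebra_simps)
      also have "\<dots> = \<Delta> X * (y - g X) * sigma_prod \<sigma> X" using X finI by simp
      finally show ?thesis .
    qed
    have lip: "\<bar>f (g(X:=y)) - f g\<bar> \<le> (\<beta> * \<bar>\<Delta> X\<bar>) * \<bar>y - g X\<bar>" if X: "X \<in> Pow \<Lambda>" for g X y
      unfolding fe
    proof (rule lse_lip[OF cf])
      fix \<sigma> assume \<sigma>: "\<sigma> \<in> configs \<Lambda>"
      have "\<bar>\<beta> * E \<sigma> (g(X := y)) - \<beta> * E \<sigma> g\<bar> = \<beta> * (\<bar>\<Delta> X\<bar> * \<bar>y - g X\<bar> * \<bar>sigma_prod \<sigma> X\<bar>)"
        using Ediff[OF X, of \<sigma> g y] \<beta> by (simp flip: right_diff_distrib add: abs_mult)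
      also have "\<dots> \<le> \<beta> * (\<bar>\<Delta> X\<bar> * \<bar>y - g X\<bar> * 1)"
        using sp_bound[OF \<sigma>] X \<beta> by (intro mult_left_mono) auto
      finally show "\<bar>\<beta> * E \<sigma> (g(X := y)) - \<beta> * E \<sigma> g\<bar> \<le> \<beta> * \<bar>\<Delta> X\<bar> * \<bar>y - g X\<bar>" by simp
    qed
    have bd: "\<bar>f g\<bar> \<le> \<bar>ln (real (card (configs \<Lambda>)))\<bar> + (\<Sum>X\<in>Pow \<Lambda>. (\<beta> * \<bar>\<Delta> X\<bar>) * \<bar>g X\<bar>)" for g
    proof -
      have "\<bar>ln (\<Sum>\<sigma>\<in>configs \<Lambda>. exp (\<beta> * E \<sigma> g)) - ln (\<Sum>\<sigma>\<in>configs \<Lambda>. exp ((\<lambda>_. 0) \<sigma>))\<bar> \<le> (\<Sum>X\<in>Pow \<Lambda>. (\<beta> * \<bar>\<Delta> X\<bar>) * \<bar>g X\<bar>)"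
      proof (rule lse_lip[OF cf])
        fix \<sigma> assume \<sigma>: "\<sigma> \<in> configs \<Lambda>"
        have "\<bar>E \<sigma> g\<bar> \<le> (\<Sum>X\<in>Pow \<Lambda>. \<bar>\<Delta> X * g X * sigma_prod \<sigma> X\<bar>)"
          unfolding E_def by (rule sum_abs)
        also have "\<dots> \<le> (\<Sum>X\<in>Pow \<Lambda>. \<bar>\<Delta> X\<bar> * \<bar>g X\<bar>)"
        proof (rule sum_mono)
          fix X assume "X \<in> Pow \<Lambda>"
          then have "\<bar>sigma_prod \<sigma> X\<bar> \<le> 1" using sp_bound[OF \<sigma>] by auto
          then show "\<bar>\<Delta> X * g X * sigma_prod \<sigma> X\<bar> \<le> \<bar>\<Delta> X\<bar> * \<bar>g X\<bar>"
            by (simp add: abs_mult mult_left_le)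
        qed
        finally have "\<beta> * \<bar>E \<sigma> g\<bar> \<le> \<beta> * (\<Sum>X\<in>Pow \<Lambda>. \<bar>\<Delta> X\<bar> * \<bar>g X\<bar>)"
          using \<beta> by (intro mult_left_mono) auto
        then show "\<bar>\<beta> * E \<sigma> g - (\<lambda>_. 0) \<sigma>\<bar> \<le> (\<Sum>X\<in>Pow \<Lambda>. (\<beta> * \<bar>\<Delta> X\<bar>) * \<bar>g X\<bar>)"
          using \<beta> by (simp add: abs_mult sum_distrib_left mult.assoc)
      qed
      then show ?thesis unfolding fe by simp
    qed
    have fm: "f \<in> borel_measurable ?P"
    proof -
      have "f = (\<lambda>g. ln (\<Sum>\<sigma>\<in>configs \<Lambda>. exp (\<beta> * (\<Sum>X\<in>Pow \<Lambda>. \<Delta> X * g X * sigma_prod \<sigma> X))))"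
        using fe unfolding E_def by auto
      also have "\<dots> \<in> borel_measurable ?P" by measurable
      finally show ?thesis .
    qed
    note ib = int_bound[OF finI fm bd]
    have "(\<integral>x. (f x)^2 \<partial>?P) - (\<integral>x. f x \<partial>?P)^2 \<le> (\<Sum>X\<in>Pow \<Lambda>. (\<beta> * \<bar>\<Delta> X\<bar>)^2)"
      by (rule ES[OF finI ib]) (rule lip, auto)
    also have "\<dots> = \<beta>^2 * (\<Sum>X\<in>Pow \<Lambda>. (\<Delta> X)^2)"
      by (simp add: power_mult_distrib sum_distrib_left)
    also have "\<dots> \<le> \<beta>^2 * (cbar * real (card \<Lambda>))"
      using cbar[OF box] cardpos by (intro mult_left_mono) (auto simp: pos_divide_le_eq)
    also have "\<dots> \<le> c \<beta> * real (card \<Lambda>)"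
    proof -
      have "cbar * real (card \<Lambda>) \<le> (\<bar>cbar\<bar>+1) * real (card \<Lambda>)"
        using cardpos by (intro mult_right_mono) auto
      then show ?thesis unfolding c_def mult.assoc by (rule mult_left_mono) simp
    qed
    finally show ?thesis
      unfolding Var_Av_def Av_def gauss_space_def f_def by simp
  qed
  moreover have "\<forall>\<beta>>0. c \<beta> > 0" unfolding c_def by (auto intro!: mult_pos_pos)
  ultimately show ?thesis by blast
qed

end
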